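(* Let $I\subset F$ be a graded two-sided ideal and $J=L(I)\subset R$. For every $d\ge0$, $\iota(I_d)=J(d)_d$, where $J(d)=J\cap R(d)$. In particular $\dim_{\mathbb K}I_d=\dim_{\mathbb K}J(d)_d$.
   Context: Let $\mathbb K$ be a field and $F=\mathbb K\langle x_1,\dots,x_n\rangle$ the free associative algebra with standard grading; $I_d=I\cap F_d$. Let $P=\mathbb K[x_{ij}\mid 1\le i\le n,\ j\ge1]$ be the commutative polynomial ring with $\deg x_{ij}=1$, $Q\subset P$ the ideal generated by all $x_{ij}x_{kj}$ ($1\le i,k\le n$, $j\ge1$), and $R=P/Q$. Let $\sigma:R\to R$ be the algebra endomorphism $x_{ij}\mapsto x_{i,j+1}$. Let $\iota:F\to R$ be the $\mathbb K$-linear map sending each word $x_{i_1}\cdots x_{i_d}$ to $x_{i_1 1}x_{i_2 2}\cdots x_{i_d d}$. For $d\ge0$, $R(d)$ is the subalgebra of $R$ generated by the $x_{ij}$ with $j\le d$ (i.e. $P(d)/(Q\cap P(d))$ with $P(d)=\mathbb K[x_{ij}\mid j\le d]$). For a graded two-sided ideal $I\subset F$, its letterplace analogue $L(I)$ is the ideal of $R$ generated by $\bigcup_{k\ge0}\sigma^k(\iota(I))$. *)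

theory Defs
  imports "HOL-Library.Poly_Mapping"
begin

text \<open>Elements of F: finitely supported K-valued functions on words; a word
  x_{i_1}...x_{i_d} is the list [i_1,...,i_d] with letters in {1..n}.\<close>

type_synonym 'k freealg = "nat list \<Rightarrow>\<^sub>0 'k"

definition F_set :: "nat \<Rightarrow> 'k::field freealg set" where
  "F_set n = {f. \<forall>w \<in> Poly_Mapping.keys f. set w \<subseteq> {1..n}}"

definition fmul :: "'k::field freealg \<Rightarrow> 'k freealg \<Rightarrow> 'k freealg" where
  "fmul f g = (\<Sum>u\<in>Poly_Mapping.keys f. \<Sum>v\<in>Poly_Mapping.keys g.
                 Poly_Mapping.single (u @ v) (Poly_Mapping.lookup f u * Poly_Mapping.lookup g v))"

definition F_homog :: "nat \<Rightarrow> 'k::field freealg \<Rightarrow> bool" where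
  "F_homog d f \<longleftrightarrow> (\<forall>w \<in> Poly_Mapping.keys f. length w = d)"

definition F_component :: "nat \<Rightarrow> 'k::field freealg \<Rightarrow> 'k freealg" where
  "F_component d f = (\<Sum>w\<in>{w \<in> Poly_Mapping.keys f. length w = d}.
                        Poly_Mapping.single w (Poly_Mapping.lookup f w))"

definition graded_ideal_F :: "nat \<Rightarrow> 'k::field freealg set \<Rightarrow> bool" where
  "graded_ideal_F n I \<longleftrightarrow>
     I \<subseteq> F_set n \<and> 0 \<in> I \<and>
     (\<forall>f\<in>I. \<forall>g\<in>I. f + g \<in> I) \<and>
     (\<forall>a\<in>F_set n. \<forall>f\<in>I. fmul a f \<in> I \<and> fmul f a \<in> I) \<and>
     (\<forall>f\<in>I. \<forall>d. F_component d f \<in> I)"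

definition ideal_deg :: "'k::field freealg set \<Rightarrow> nat \<Rightarrow> 'k freealg set" where
  "ideal_deg I d = {f \<in> I. F_homog d f}"

text \<open>Polynomials in variables x_{ij} indexed by pairs (i,j); a monomial is a
  finitely supported exponent vector.\<close>

type_synonym 'k lpoly = "((nat \<times> nat) \<Rightarrow>\<^sub>0 nat) \<Rightarrow>\<^sub>0 'k"

definition var :: "nat \<Rightarrow> nat \<Rightarrow> 'k::field lpoly" where
  "var i j = Poly_Mapping.single (Poly_Mapping.single (i, j) 1) 1"

definition P_set :: "nat \<Rightarrow> 'k::field lpoly set" where
  "P_set n = {p. \<forall>m \<in> Poly_Mapping.keys p. \<forall>v \<in> Poly_Mapping.keys m.
                   1 \<le> fst v \<and> fst v \<le> n \<and> 1 \<le> snd v}"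

definition Pd_set :: "nat \<Rightarrow> nat \<Rightarrow> 'k::field lpoly set" where
  "Pd_set n d = {p \<in> P_set n. \<forall>m \<in> Poly_Mapping.keys p. \<forall>v \<in> Poly_Mapping.keys m. snd v \<le> d}"

definition P_homog :: "nat \<Rightarrow> 'k::field lpoly \<Rightarrow> bool" where
  "P_homog d p \<longleftrightarrow> (\<forall>m \<in> Poly_Mapping.keys p. (\<Sum>v\<in>Poly_Mapping.keys m. Poly_Mapping.lookup m v) = d)"

inductive_set ideal_gen :: "'a::comm_ring_1 set \<Rightarrow> 'a set \<Rightarrow> 'a set" for C S where
  gen_zero: "0 \<in> ideal_gen C S"
| gen_base: "s \<in> S \<Longrightarrow> s \<in> ideal_gen C S"
| gen_add:  "a \<in> ideal_gen C S \<Longrightarrow> b \<in> ideal_gen C S \<Longrightarrow> a + b \<in> ideal_gen C S"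
| gen_mult: "r \<in> C \<Longrightarrow> a \<in> ideal_gen C S \<Longrightarrow> r * a \<in> ideal_gen C S"

definition Q_ideal :: "nat \<Rightarrow> 'k::field lpoly set" where
  "Q_ideal n = ideal_gen (P_set n)
     {var i j * var k j | i k j. 1 \<le> i \<and> i \<le> n \<and> 1 \<le> k \<and> k \<le> n \<and> 1 \<le> j}"

text \<open>Elements of R = P/Q are represented by their representatives in P;
  two representatives p, q give the same element of R iff p - q \<in> Q.\<close>

text \<open>The shift endomorphism x_ij \<mapsto> x_{i,j+1} on P (it preserves Q, hence
  induces sigma on R).\<close>
definition mono_shift :: "((nat \<times> nat) \<Rightarrow>\<^sub>0 nat) \<Rightarrow> ((nat \<times> nat) \<Rightarrow>\<^sub>0 nat)" where
  "mono_shift m = (\<Sum>v\<in>Poly_Mapping.keys m. Poly_Mapping.single (fst v, Suc (snd v)) (Poly_Mapping.lookup m v))"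

definition sigma :: "'k::field lpoly \<Rightarrow> 'k lpoly" where
  "sigma p = (\<Sum>m\<in>Poly_Mapping.keys p. Poly_Mapping.single (mono_shift m) (Poly_Mapping.lookup p m))"

definition word_mono :: "nat list \<Rightarrow> ((nat \<times> nat) \<Rightarrow>\<^sub>0 nat)" where
  "word_mono w = (\<Sum>k<length w. Poly_Mapping.single (w ! k, Suc k) 1)"

definition iota :: "'k::field freealg \<Rightarrow> 'k lpoly" where
  "iota f = (\<Sum>w\<in>Poly_Mapping.keys f. Poly_Mapping.single (word_mono w) (Poly_Mapping.lookup f w))"

text \<open>Preimage in P of the letterplace ideal L(I) \<subseteq> R: the ideal of P generated
  by Q together with all sigma^k(iota(I)).\<close>
definition L_preimage :: "nat \<Rightarrow> 'k::field freealg set \<Rightarrow> 'k lpoly set" where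
  "L_preimage n I = ideal_gen (P_set n)
     (Q_ideal n \<union> (\<Union>k. (sigma ^^ k) ` iota ` I))"

end

theory Submission
  imports Defs
begin


lemma lookup_single_if: "Poly_Mapping.lookup (Poly_Mapping.single k v) k' = (if k = k' then v else 0)"
  by (simp add: lookup_single)

definition pmapc :: "('a \<Rightarrow> 'b) \<Rightarrow> 'c::comm_ring_1 \<Rightarrow> ('a \<Rightarrow>\<^sub>0 'c) \<Rightarrow> ('b \<Rightarrow>\<^sub>0 'c)" where
  "pmapc \<phi> c f = (\<Sum>x\<in>Poly_Mapping.keys f. Poly_Mapping.single (\<phi> x) (c * Poly_Mapping.lookup f x))"

lemma lookup_pmapc_img:
  assumes "inj \<phi>"
  shows "Poly_Mapping.lookup (pmapc \<phi> c f) (\<phi> y) = c * Poly_Mapping.lookup f y"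
proof -
  have "Poly_Mapping.lookup (pmapc \<phi> c f) (\<phi> y) =
     (\<Sum>x\<in>Poly_Mapping.keys f. if x = y then c * Poly_Mapping.lookup f x else 0)"
    unfolding pmapc_def lookup_sum lookup_single_if using assms
    by (intro sum.cong) (auto dest: injD)
  also have "\<dots> = c * Poly_Mapping.lookup f y"
    by (simp add: in_keys_iff)
  finally show ?thesis .
qed

lemma lookup_pmapc_out:
  assumes "m \<notin> range \<phi>"
  shows "Poly_Mapping.lookup (pmapc \<phi> c f) m = 0"
  unfolding pmapc_def lookup_sum lookup_single_if using assms
  by (intro sum.neutral) auto

lemma lookup_pmapc:
  assumes "inj \<phi>"
  shows "Poly_Mapping.lookup (pmapc \<phi> c f) m =
     (if m \<in> range \<phi> then c * Poly_Mapping.lookup f (inv \<phi> m) else 0)"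
  using lookup_pmapc_img[OF assms] lookup_pmapc_out
  by (metis f_inv_into_f)

lemma pmapc_add:
  assumes "inj \<phi>"
  shows "pmapc \<phi> c (a + b) = pmapc \<phi> c a + pmapc \<phi> c b"
  by (rule poly_mapping_eqI) (simp add: lookup_pmapc[OF assms] lookup_add distrib_left)

lemma pmapc_diff:
  assumes "inj \<phi>"
  shows "pmapc \<phi> c (a - b) = pmapc \<phi> c a - pmapc \<phi> c b"
  by (rule poly_mapping_eqI) (simp add: lookup_pmapc[OF assms] lookup_minus right_diff_distrib)

lemma pmapc_zero[simp]: "pmapc \<phi> c 0 = 0"
  by (simp add: pmapc_def)

lemma pmapc_sum:
  assumes "inj \<phi>"
  shows "pmapc \<phi> c (sum g A) = (\<Sum>a\<in>A. pmapc \<phi> c (g a))"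
  by (rule poly_mapping_eqI) (simp add: lookup_pmapc[OF assms] lookup_sum sum_distrib_left)

lemma pmapc_single:
  assumes "inj \<phi>"
  shows "pmapc \<phi> c (Poly_Mapping.single x a) = Poly_Mapping.single (\<phi> x) (c * a)"
proof (rule poly_mapping_eqI)
  fix m
  show "Poly_Mapping.lookup (pmapc \<phi> c (Poly_Mapping.single x a)) m = Poly_Mapping.lookup (Poly_Mapping.single (\<phi> x) (c * a)) m"
  proof (cases "m \<in> range \<phi>")
    case True
    then obtain y where "m = \<phi> y" by auto
    then show ?thesis by (simp add: lookup_pmapc_img[OF assms] lookup_single_if inj_eq[OF assms])
  next
    case False
    then have "m \<noteq> \<phi> x" by auto
    then show ?thesis using False by (simp add: lookup_pmapc_out lookup_single_if)
  qed
qed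

lemma pmapc_comp:
  assumes "inj \<phi>" "inj \<psi>"
  shows "pmapc \<phi> c (pmapc \<psi> c' f) = pmapc (\<phi> \<circ> \<psi>) (c * c') f"
proof (rule poly_mapping_eqI)
  fix m
  have ij: "inj (\<phi> \<circ> \<psi>)" using assms by (simp add: inj_compose)
  show "Poly_Mapping.lookup (pmapc \<phi> c (pmapc \<psi> c' f)) m = Poly_Mapping.lookup (pmapc (\<phi> \<circ> \<psi>) (c * c') f) m"
  proof (cases "m \<in> range (\<phi> \<circ> \<psi>)")
    case True
    then obtain y where "m = \<phi> (\<psi> y)" by auto
    then show ?thesis using lookup_pmapc_img[OF ij, of "c*c'" f y]
      by (simp add: lookup_pmapc_img assms mult.assoc)
  next
    case False
    show ?thesis
    proof (cases "m \<in> range \<phi>")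
      case True
      then obtain z where z: "m = \<phi> z" by auto
      with False have "z \<notin> range \<psi>" by auto
      then show ?thesis using False z by (simp add: lookup_pmapc_img assms lookup_pmapc_out)
    next
      case False
      then show ?thesis using \<open>m \<notin> range (\<phi> \<circ> \<psi>)\<close> by (simp add: lookup_pmapc_out)
    qed
  qed
qed

lemma keys_pmapc_sub: "Poly_Mapping.keys (pmapc \<phi> c f) \<subseteq> \<phi> ` Poly_Mapping.keys f"
proof -
  have "Poly_Mapping.keys (pmapc \<phi> c f) \<subseteq> (\<Union>x\<in>Poly_Mapping.keys f. Poly_Mapping.keys (Poly_Mapping.single (\<phi> x) (c * Poly_Mapping.lookup f x)))"
    unfolding pmapc_def by (rule keys_sum)
  also have "\<dots> \<subseteq> \<phi> ` Poly_Mapping.keys f" by auto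
  finally show ?thesis .
qed

lemma pm_expand: "f = (\<Sum>x\<in>Poly_Mapping.keys f. Poly_Mapping.single x (Poly_Mapping.lookup f x))"
  by (rule poly_mapping_eqI) (simp add: lookup_sum lookup_single_if in_keys_iff)

definition proj :: "'a set \<Rightarrow> ('a \<Rightarrow>\<^sub>0 'c::zero) \<Rightarrow> ('a \<Rightarrow>\<^sub>0 'c)" where
  "proj W p = Abs_poly_mapping (\<lambda>m. if m \<in> W then Poly_Mapping.lookup p m else 0)"

lemma lookup_proj: "Poly_Mapping.lookup (proj W p) m = (if m \<in> W then Poly_Mapping.lookup p m else 0)"
proof -
  have "finite {m. (if m \<in> W then Poly_Mapping.lookup p m else 0) \<noteq> 0}"
    by (rule finite_subset[OF _ finite_keys[of p]]) (auto simp: in_keys_iff)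
  then show ?thesis unfolding proj_def by simp
qed

lemma proj_add: "proj W (a + b) = proj W a + proj W (b::'a \<Rightarrow>\<^sub>0 'c::comm_monoid_add)"
  by (rule poly_mapping_eqI) (simp add: lookup_proj lookup_add)

lemma proj_zero[simp]: "proj W 0 = 0"
  by (rule poly_mapping_eqI) (simp add: lookup_proj)

lemma proj_sum: "proj W (sum g A) = (\<Sum>a\<in>A. proj W (g a :: 'a \<Rightarrow>\<^sub>0 'c::comm_monoid_add))"
  by (rule poly_mapping_eqI) (simp add: lookup_proj lookup_sum)

lemma proj_single: "proj W (Poly_Mapping.single m a) = (if m \<in> W then Poly_Mapping.single m a else 0)"
  by (rule poly_mapping_eqI) (simp add: lookup_proj lookup_single_if)



lemma lookup_word_mono:
  "Poly_Mapping.lookup (word_mono w) v =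
     (if 1 \<le> snd v \<and> snd v \<le> length w \<and> w ! (snd v - 1) = fst v then 1 else 0)"
proof -
  have "Poly_Mapping.lookup (word_mono w) v = (\<Sum>k<length w. if (w ! k, Suc k) = v then 1 else 0)"
    unfolding word_mono_def lookup_sum lookup_single_if by simp
  also have "\<dots> = (\<Sum>k<length w. if k = snd v - 1 then
        (if 1 \<le> snd v \<and> w ! (snd v - 1) = fst v then 1 else 0) else 0)"
    by (intro sum.cong) (auto simp: prod_eq_iff)
  also have "\<dots> = (if 1 \<le> snd v \<and> snd v \<le> length w \<and> w ! (snd v - 1) = fst v then 1 else 0)"
    by (subst sum.delta) auto
  finally show ?thesis .
qed

lemma inj_word_mono: "inj word_mono"
proof (rule injI)
  fix a b assume eq: "word_mono a = word_mono b"
  have L: "Poly_Mapping.lookup (word_mono a) v = Poly_Mapping.lookup (word_mono b) v" for v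
    using eq by simp
  have len: "length a = length b"
  proof (rule ccontr)
    assume "length a \<noteq> length b"
    then consider "length a < length b" | "length b < length a" by linarith
    then show False
    proof cases
      case 1 then show False using L[of "(b ! (length b - 1), length b)"]
        by (simp add: lookup_word_mono split: if_splits)
    next
      case 2 then show False using L[of "(a ! (length a - 1), length a)"]
        by (simp add: lookup_word_mono split: if_splits)
    qed
  qed
  show "a = b"
  proof (rule nth_equalityI[OF len])
    fix k assume "k < length a"
    then show "a ! k = b ! k" using L[of "(a ! k, Suc k)"] len
      by (simp add: lookup_word_mono split: if_splits)
  qed
qed

lemma lookup_mono_shift:
  "Poly_Mapping.lookup (mono_shift m) v = (if snd v = 0 then 0 else Poly_Mapping.lookup m (fst v, snd v - 1))"
proof -
  have "Poly_Mapping.lookup (mono_shift m) v =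
      (\<Sum>u\<in>Poly_Mapping.keys m. if (fst u, Suc (snd u)) = v then Poly_Mapping.lookup m u else 0)"
    unfolding mono_shift_def lookup_sum lookup_single_if by simp
  also have "\<dots> = (\<Sum>u\<in>Poly_Mapping.keys m. if u = (fst v, snd v - 1) then
      (if snd v = 0 then 0 else Poly_Mapping.lookup m u) else 0)"
    by (intro sum.cong) (auto simp: prod_eq_iff)
  also have "\<dots> = (if snd v = 0 then 0 else Poly_Mapping.lookup m (fst v, snd v - 1))"
    by (subst sum.delta) (auto simp: in_keys_iff)
  finally show ?thesis .
qed

lemma inj_mono_shift: "inj mono_shift"
proof (rule injI)
  fix a b assume eq: "mono_shift a = mono_shift b"
  show "a = b"
  proof (rule poly_mapping_eqI)
    fix v :: "nat \<times> nat"
    have "Poly_Mapping.lookup (mono_shift a) (fst v, Suc (snd v)) = Poly_Mapping.lookup (mono_shift b) (fst v, Suc (snd v))"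
      using eq by simp
    then show "Poly_Mapping.lookup a v = Poly_Mapping.lookup b v" by (simp add: lookup_mono_shift)
  qed
qed

definition S :: "nat \<Rightarrow> ((nat \<times> nat) \<Rightarrow>\<^sub>0 nat) \<Rightarrow> ((nat \<times> nat) \<Rightarrow>\<^sub>0 nat)" where
  "S k = mono_shift ^^ k"

lemma lookup_S:
  "Poly_Mapping.lookup (S k m) v = (if snd v < k then 0 else Poly_Mapping.lookup m (fst v, snd v - k))"
proof (induction k arbitrary: v)
  case 0 then show ?case by (simp add: S_def)
next
  case (Suc k)
  have "S (Suc k) m = mono_shift (S k m)" by (simp add: S_def)
  then show ?case using Suc by (auto simp: lookup_mono_shift)
qed

lemma inj_S: "inj (S k)"
proof (induction k)
  case 0 then show ?case by (simp add: S_def)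
next
  case (Suc k)
  have "S (Suc k) = mono_shift \<circ> S k" by (simp add: S_def)
  then show ?case using Suc inj_compose[OF inj_mono_shift, of "S k"] by metis
qed

lemma S_add: "S k (a + b) = S k a + S k b"
  by (rule poly_mapping_eqI) (simp add: lookup_S lookup_add)

lemma S_zero[simp]: "S k 0 = 0"
  by (rule poly_mapping_eqI) (simp add: lookup_S)

lemma S_S: "S k (S l m) = S (k + l) m"
  by (rule poly_mapping_eqI) (auto simp add: lookup_S diff_diff_add)

lemma sigma_pmapc: "sigma = pmapc mono_shift 1"
  by (rule ext) (simp add: sigma_def pmapc_def)

lemma iota_pmapc: "iota = pmapc word_mono 1"
  by (rule ext) (simp add: iota_def pmapc_def)

lemma sigma_pow: "(sigma ^^ k) = pmapc (S k) 1"
proof (induction k)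
  case 0
  show ?case
  proof (rule ext)
    fix p :: "'a lpoly"
    show "(sigma ^^ 0) p = pmapc (S 0) 1 p"
      by (simp add: S_def pmapc_def pm_expand[symmetric])
  qed
next
  case (Suc k)
  show ?case
  proof (rule ext)
    fix p :: "'a lpoly"
    have "(sigma ^^ Suc k) p = pmapc mono_shift 1 (pmapc (S k) 1 p)"
      using Suc by (simp add: sigma_pmapc)
    also have "\<dots> = pmapc (mono_shift \<circ> S k) 1 p"
      by (simp add: pmapc_comp inj_mono_shift inj_S)
    also have "mono_shift \<circ> S k = S (Suc k)" by (simp add: S_def)
    finally show "(sigma ^^ Suc k) p = pmapc (S (Suc k)) 1 p" .
  qed
qed

lemma word_mono_append: "word_mono (a @ b) = word_mono a + S (length a) (word_mono b)"
  by (rule poly_mapping_eqI) (auto simp: lookup_add lookup_S lookup_word_mono nth_append)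

definition deg :: "((nat \<times> nat) \<Rightarrow>\<^sub>0 nat) \<Rightarrow> nat" where
  "deg m = (\<Sum>v\<in>Poly_Mapping.keys m. Poly_Mapping.lookup m v)"

lemma deg_superset: "finite A \<Longrightarrow> Poly_Mapping.keys m \<subseteq> A \<Longrightarrow> deg m = (\<Sum>v\<in>A. Poly_Mapping.lookup m v)"
  unfolding deg_def by (rule sum.mono_neutral_left) (auto simp: in_keys_iff)

lemma deg_add: "deg (a + b) = deg a + deg b"
proof -
  let ?A = "Poly_Mapping.keys a \<union> Poly_Mapping.keys b"
  have "deg (a + b) = (\<Sum>v\<in>?A. Poly_Mapping.lookup (a + b) v)"
    by (rule deg_superset) (auto dest: subsetD[OF keys_add])
  also have "\<dots> = (\<Sum>v\<in>?A. Poly_Mapping.lookup a v) + (\<Sum>v\<in>?A. Poly_Mapping.lookup b v)"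
    by (simp add: lookup_add sum.distrib)
  also have "\<dots> = deg a + deg b"
    by (simp add: deg_superset[symmetric])
  finally show ?thesis .
qed

lemma deg_zero[simp]: "deg 0 = 0" by (simp add: deg_def)

lemma deg_single[simp]: "deg (Poly_Mapping.single v c) = c"
  by (simp add: deg_def)

lemma deg_sum: "deg (sum g A) = (\<Sum>a\<in>A. deg (g a))"
  by (induction A rule: infinite_finite_induct) (auto simp: deg_add)

lemma deg_mono_shift: "deg (mono_shift m) = deg m"
  unfolding mono_shift_def deg_sum deg_single by (simp add: deg_def)

lemma deg_S: "deg (S k m) = deg m"
  by (induction k) (auto simp: S_def deg_mono_shift)

lemma deg_word_mono: "deg (word_mono w) = length w"
  by (simp add: word_mono_def deg_sum)



definition pvalid :: "nat \<Rightarrow> ((nat \<times> nat) \<Rightarrow>\<^sub>0 nat) \<Rightarrow> bool" where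
  "pvalid n m \<longleftrightarrow> (\<forall>v\<in>Poly_Mapping.keys m. 1 \<le> fst v \<and> fst v \<le> n \<and> 1 \<le> snd v)"

definition Qmono :: "((nat \<times> nat) \<Rightarrow>\<^sub>0 nat) \<Rightarrow> bool" where
  "Qmono m \<longleftrightarrow> (\<exists>i k j. \<forall>v. Poly_Mapping.lookup (Poly_Mapping.single (i,j) 1 + Poly_Mapping.single (k,j) 1) v
                            \<le> Poly_Mapping.lookup m v)"

lemma P_set_pvalid: "P_set n = {p. \<forall>m\<in>Poly_Mapping.keys p. pvalid n m}"
  by (auto simp: P_set_def pvalid_def)

lemma keys_add_nat: "Poly_Mapping.keys (a + b) = Poly_Mapping.keys a \<union> Poly_Mapping.keys (b :: 'a \<Rightarrow>\<^sub>0 nat)"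
  by (auto simp: in_keys_iff lookup_add)

lemma pvalid_add: "pvalid n a \<Longrightarrow> pvalid n b \<Longrightarrow> pvalid n (a + b)"
  by (auto simp: pvalid_def keys_add_nat)

lemma P_set_mult: "p \<in> P_set n \<Longrightarrow> q \<in> P_set n \<Longrightarrow> p * q \<in> P_set n"
  unfolding P_set_pvalid using keys_mult[of p q] by (auto intro!: pvalid_add)

lemma P_set_add: "p \<in> P_set n \<Longrightarrow> q \<in> P_set n \<Longrightarrow> p + q \<in> P_set n"
  unfolding P_set_pvalid using keys_add[of p q] by auto

lemma P_set_diff: "p \<in> P_set n \<Longrightarrow> q \<in> P_set n \<Longrightarrow> p - q \<in> P_set n"
  unfolding P_set_pvalid using keys_diff[of p q] by auto

lemma P_set_zero: "0 \<in> P_set n" by (simp add: P_set_def)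
lemma P_set_one: "1 \<in> P_set n" by (simp add: P_set_def)

lemma P_set_single: "pvalid n m \<Longrightarrow> Poly_Mapping.single m c \<in> P_set n"
  by (simp add: P_set_pvalid)

lemma ideal_gen_P:
  assumes "G \<subseteq> P_set n" "a \<in> ideal_gen (P_set n) G"
  shows "a \<in> P_set n"
  using assms(2) by induction (use assms(1) in \<open>auto intro: P_set_zero P_set_add P_set_mult\<close>)

lemma var_mult: "var i j * var k j = Poly_Mapping.single (Poly_Mapping.single (i,j) 1 + Poly_Mapping.single (k,j) 1) 1"
  by (simp add: var_def mult_single)

lemma Qgen_P: "{var i j * var k j | i k j. 1 \<le> i \<and> i \<le> n \<and> 1 \<le> k \<and> k \<le> n \<and> 1 \<le> j} \<subseteq> P_set n"
  by (auto simp: var_mult P_set_pvalid pvalid_def keys_add_nat)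

lemma Q_P: "q \<in> Q_ideal n \<Longrightarrow> q \<in> P_set n"
  unfolding Q_ideal_def using ideal_gen_P[OF Qgen_P] by blast

lemma Qmono_add: "Qmono b \<Longrightarrow> Qmono (a + b)"
  unfolding Qmono_def lookup_add by (meson trans_le_add2)

lemma Q_keys_Qmono:
  assumes "q \<in> Q_ideal n" "m \<in> Poly_Mapping.keys q"
  shows "Qmono m"
proof -
  have "\<forall>m\<in>Poly_Mapping.keys q. Qmono m"
    using assms(1) unfolding Q_ideal_def
  proof induction
    case gen_zero then show ?case by simp
  next
    case (gen_base s)
    then obtain i k j where s: "s = var i j * var k j" by blast
    have "Qmono (Poly_Mapping.single (i,j) 1 + Poly_Mapping.single (k,j) 1)"
      unfolding Qmono_def by (rule exI[of _ i], rule exI[of _ k], rule exI[of _ j]) simp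
    then show ?case using s by (simp add: var_mult)
  next
    case (gen_add a b)
    then show ?case using keys_add[of a b] by auto
  next
    case (gen_mult r a)
    then show ?case using keys_mult[of r a] by (auto intro: Qmono_add)
  qed
  with assms(2) show ?thesis by blast
qed

lemma Q_add: "a \<in> Q_ideal n \<Longrightarrow> b \<in> Q_ideal n \<Longrightarrow> a + b \<in> Q_ideal n"
  unfolding Q_ideal_def by (rule gen_add)

lemma Q_zero: "0 \<in> Q_ideal n"
  unfolding Q_ideal_def by (rule gen_zero)

lemma Q_sum: "(\<And>a. a \<in> A \<Longrightarrow> g a \<in> Q_ideal n) \<Longrightarrow> sum g A \<in> Q_ideal n"
  by (induction A rule: infinite_finite_induct) (auto intro: Q_add Q_zero)

lemma Q_single:
  assumes "Qmono m" "pvalid n m"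
  shows "Poly_Mapping.single m c \<in> Q_ideal n"
proof -
  obtain i k j where le: "\<forall>v. Poly_Mapping.lookup (Poly_Mapping.single (i,j) 1 + Poly_Mapping.single (k,j) 1) v
                            \<le> Poly_Mapping.lookup m v"
    using assms(1) unfolding Qmono_def by blast
  define g where "g = Poly_Mapping.single (i,j) 1 + Poly_Mapping.single (k,j) (1::nat)"
  have "Poly_Mapping.lookup m (i,j) \<ge> 1" using le[rule_format, of "(i,j)"]
    by (simp add: lookup_add lookup_single_if)
  then have ij: "(i,j) \<in> Poly_Mapping.keys m" by (simp add: in_keys_iff)
  have "Poly_Mapping.lookup m (k,j) \<ge> 1" using le[rule_format, of "(k,j)"]
    by (simp add: lookup_add lookup_single_if)
  then have kj: "(k,j) \<in> Poly_Mapping.keys m" by (simp add: in_keys_iff)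
  have bounds: "1 \<le> i \<and> i \<le> n \<and> 1 \<le> k \<and> k \<le> n \<and> 1 \<le> j"
    using ij kj assms(2) unfolding pvalid_def by fastforce
  have mg: "(m - g) + g = m"
  proof (rule poly_mapping_eqI)
    fix v show "Poly_Mapping.lookup (m - g + g) v = Poly_Mapping.lookup m v"
      using le[rule_format, of v] by (simp add: lookup_add lookup_minus g_def)
  qed
  have "pvalid n (m - g)"
    using assms(2) unfolding pvalid_def by (auto simp: in_keys_iff lookup_minus)
  then have P: "Poly_Mapping.single (m - g) c \<in> P_set n" by (rule P_set_single)
  have "Poly_Mapping.single (m - g) c * (var i j * var k j) = Poly_Mapping.single ((m - g) + g) c"
    by (simp add: var_mult mult_single g_def)
  then have "Poly_Mapping.single m c = Poly_Mapping.single (m - g) c * (var i j * var k j)"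
    by (simp add: mg)
  also have "\<dots> \<in> Q_ideal n"
    unfolding Q_ideal_def
    by (rule gen_mult[OF P], rule gen_base) (use bounds in blast)
  finally show ?thesis .
qed

lemma word_mono_not_Qmono: "\<not> Qmono (word_mono w)"
proof
  assume "Qmono (word_mono w)"
  then obtain i k j where le: "\<And>v. Poly_Mapping.lookup (Poly_Mapping.single (i,j) 1 + Poly_Mapping.single (k,j) 1) v
                            \<le> Poly_Mapping.lookup (word_mono w) v"
    unfolding Qmono_def by blast
  show False
  proof (cases "i = k")
    case True
    then show False using le[of "(i,j)"] by (simp add: lookup_add lookup_word_mono split: if_splits)
  next
    case False
    have "1 \<le> Poly_Mapping.lookup (word_mono w) (i,j)" using le[of "(i,j)"] False
      by (simp add: lookup_add lookup_single_if)
    moreover have "1 \<le> Poly_Mapping.lookup (word_mono w) (k,j)" using le[of "(k,j)"] False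
      by (simp add: lookup_add lookup_single_if)
    ultimately show False using False by (simp add: lookup_word_mono split: if_splits)
  qed
qed

lemma proj_as_sum: "proj W p = (\<Sum>m\<in>{m\<in>Poly_Mapping.keys p. m \<in> W}. Poly_Mapping.single m (Poly_Mapping.lookup p m))"
  by (rule poly_mapping_eqI) (auto simp: lookup_proj lookup_sum lookup_single_if in_keys_iff)

lemma minus_proj: "p - proj W p = proj (- W) (p :: 'a \<Rightarrow>\<^sub>0 'b::ab_group_add)"
  by (rule poly_mapping_eqI) (simp add: lookup_proj lookup_minus)



lemma to_word:
  assumes pv: "pvalid n m" and col: "\<forall>v\<in>Poly_Mapping.keys m. snd v \<le> d"
    and nq: "\<not> Qmono m" and dg: "deg m = d"
  shows "\<exists>w. length w = d \<and> m = word_mono w"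
proof -
  have h1: "Poly_Mapping.lookup m v \<le> 1" for v
  proof (rule ccontr)
    assume "\<not> ?thesis"
    then have "Qmono m" unfolding Qmono_def
      by (intro exI[of _ "fst v"] exI[of _ "snd v"]) (auto simp: lookup_add lookup_single_if)
    with nq show False by simp
  qed
  have h2: "x = y" if "x \<in> Poly_Mapping.keys m" "y \<in> Poly_Mapping.keys m" "snd x = snd y" for x y
  proof (rule ccontr)
    assume ne: "x \<noteq> y"
    have "Qmono m" unfolding Qmono_def
    proof (intro exI allI)
      fix u
      show "Poly_Mapping.lookup (Poly_Mapping.single (fst x, snd x) 1 + Poly_Mapping.single (fst y, snd x) 1) u
             \<le> Poly_Mapping.lookup m u"
        using that ne by (cases x, cases y, cases u) (auto simp: lookup_add lookup_single_if in_keys_iff)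
    qed
    with nq show False by simp
  qed
  have one: "Poly_Mapping.lookup m v = 1" if "v \<in> Poly_Mapping.keys m" for v
    using h1[of v] that by (simp add: in_keys_iff)
  have cardk: "card (Poly_Mapping.keys m) = d"
    using dg unfolding deg_def by (simp add: one)
  have inj: "inj_on snd (Poly_Mapping.keys m)"
    using h2 by (auto simp: inj_on_def)
  have sub: "snd ` Poly_Mapping.keys m \<subseteq> {1..d}"
    using pv col unfolding pvalid_def by fastforce
  have img: "snd ` Poly_Mapping.keys m = {1..d}"
    by (rule card_subset_eq[OF _ sub]) (simp_all add: card_image[OF inj] cardk)
  define w where "w = map (\<lambda>j. fst (SOME x. x \<in> Poly_Mapping.keys m \<and> snd x = Suc j)) [0..<d]"
  have ex: "\<exists>x. x \<in> Poly_Mapping.keys m \<and> snd x = j" if "1 \<le> j" "j \<le> d" for j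
    using img that by (metis atLeastAtMost_iff imageE)
  have wj: "(w ! (j - 1), j) \<in> Poly_Mapping.keys m" if "1 \<le> j" "j \<le> d" for j
  proof -
    define x where "x = (SOME x. x \<in> Poly_Mapping.keys m \<and> snd x = j)"
    have x: "x \<in> Poly_Mapping.keys m \<and> snd x = j"
      unfolding x_def by (rule someI_ex) (rule ex[OF that])
    have u: "Suc ([0..<d] ! (j - 1)) = j" using that by simp
    have "w ! (j - 1) = fst (SOME x. x \<in> Poly_Mapping.keys m \<and> snd x = Suc ([0..<d] ! (j - 1)))"
      using that unfolding w_def by (subst nth_map) auto
    then have "w ! (j - 1) = fst x" unfolding u x_def .
    then show ?thesis using x by (cases x) simp
  qed
  have lw: "length w = d" by (simp add: w_def)
  have "m = word_mono w"
  proof (rule poly_mapping_eqI)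
    fix v :: "nat \<times> nat"
    obtain i j where v: "v = (i, j)" by fastforce
    show "Poly_Mapping.lookup m v = Poly_Mapping.lookup (word_mono w) v"
    proof (cases "v \<in> Poly_Mapping.keys m")
      case True
      then have b: "1 \<le> j" "j \<le> d" using sub v by auto
      have "w ! (j - 1) = i" using h2[OF wj[OF b] True] v by simp
      then show ?thesis using True one b v by (simp add: lookup_word_mono lw)
    next
      case False
      have "\<not> (1 \<le> j \<and> j \<le> d \<and> w ! (j - 1) = i)"
        using wj False v by auto
      then show ?thesis using False v by (simp add: lookup_word_mono lw in_keys_iff)
    qed
  qed
  then show ?thesis using lw by blast
qed



lemma inj_app_left: "inj ((@) u)" by (auto simp: inj_on_def)
lemma inj_app_right: "inj (\<lambda>y. y @ u)" by (auto simp: inj_on_def)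

lemma fmul_single_left: "fmul (Poly_Mapping.single u c) f = pmapc ((@) u) c f"
  by (cases "c = 0") (simp_all add: fmul_def pmapc_def)

lemma fmul_single_right: "fmul f (Poly_Mapping.single u c) = pmapc (\<lambda>y. y @ u) c f"
  by (cases "c = 0") (simp_all add: fmul_def pmapc_def mult.commute)

lemma lookup_F_component:
  "Poly_Mapping.lookup (F_component e g) w = (if length w = e then Poly_Mapping.lookup g w else 0)"
  unfolding F_component_def lookup_sum lookup_single_if
  by (cases "w \<in> Poly_Mapping.keys g") (auto simp: in_keys_iff)

lemma keys_F_component: "Poly_Mapping.keys (F_component e g) = {w \<in> Poly_Mapping.keys g. length w = e}"
  by (auto simp: in_keys_iff lookup_F_component split: if_splits)

lemma F_set_single: "set u \<subseteq> {1..n} \<Longrightarrow> Poly_Mapping.single u c \<in> F_set n"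
  by (simp add: F_set_def)

lemma iota_sum_form: "iota f = (\<Sum>w\<in>Poly_Mapping.keys f. Poly_Mapping.single (word_mono w) (Poly_Mapping.lookup f w))"
  by (simp add: iota_def)

lemma lookup_iota_word: "Poly_Mapping.lookup (iota f) (word_mono w) = Poly_Mapping.lookup f w"
  by (simp add: iota_pmapc lookup_pmapc_img[OF inj_word_mono])

lemma iota_add: "iota (a + b) = iota a + iota b"
  by (simp add: iota_pmapc pmapc_add[OF inj_word_mono])

lemma iota_diff: "iota (a - b) = iota a - iota b"
  by (simp add: iota_pmapc pmapc_diff[OF inj_word_mono])

lemma iota_zero: "iota 0 = 0" by (simp add: iota_def)

lemma word_mono_Nil[simp]: "word_mono [] = 0" by (simp add: word_mono_def)

lemma graded_I_sub: "graded_ideal_F n I \<Longrightarrow> I \<subseteq> F_set n"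
  by (simp add: graded_ideal_F_def)

lemma ideal_deg_add:
  assumes "graded_ideal_F n I" "a \<in> ideal_deg I d" "b \<in> ideal_deg I d"
  shows "a + b \<in> ideal_deg I d"
  using assms keys_add[of a b] unfolding graded_ideal_F_def ideal_deg_def F_homog_def by blast

lemma ideal_deg_zero: "graded_ideal_F n I \<Longrightarrow> 0 \<in> ideal_deg I d"
  unfolding graded_ideal_F_def ideal_deg_def F_homog_def by simp

lemma iota_img_add:
  assumes "graded_ideal_F n I" "x \<in> iota ` ideal_deg I d" "y \<in> iota ` ideal_deg I d"
  shows "x + y \<in> iota ` ideal_deg I d"
proof -
  obtain a b where "a \<in> ideal_deg I d" "b \<in> ideal_deg I d" "x = iota a" "y = iota b"
    using assms by blast
  then show ?thesis using ideal_deg_add[OF assms(1)] iota_add by (metis image_eqI)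
qed

lemma iota_img_zero: "graded_ideal_F n I \<Longrightarrow> 0 \<in> iota ` ideal_deg I d"
  using ideal_deg_zero iota_zero by (metis image_eqI)

lemma iota_img_sum:
  assumes "graded_ideal_F n I" "\<And>a. a \<in> A \<Longrightarrow> g a \<in> iota ` ideal_deg I d"
  shows "sum g A \<in> iota ` ideal_deg I d"
  using assms(2)
  by (induction A rule: infinite_finite_induct) (auto intro: iota_img_add[OF assms(1)] iota_img_zero[OF assms(1)])



lemma split_lemma:
  assumes eq: "m + S k (word_mono w0) = word_mono v0"
  shows "v0 = take k v0 @ w0 @ drop (k + length w0) v0 \<and>
    (\<forall>w. length w = length w0 \<longrightarrow> m + S k (word_mono w) = word_mono (take k v0 @ w @ drop (k + length w0) v0))"
proof (cases "w0 = []")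
  case True
  then show ?thesis using eq by simp
next
  case False
  define e0 where "e0 = length w0"
  have e0: "e0 \<ge> 1" using False by (simp add: e0_def Suc_le_eq)
  have pos: "k + i < length v0 \<and> v0 ! (k + i) = w0 ! i" if "i < e0" for i
  proof -
    have "Poly_Mapping.lookup (S k (word_mono w0)) (w0 ! i, Suc (k + i)) = 1"
      using that by (simp add: lookup_S lookup_word_mono e0_def)
    then have "Poly_Mapping.lookup (word_mono v0) (w0 ! i, Suc (k + i)) \<ge> 1"
      using eq[symmetric] by (simp add: lookup_add)
    then show ?thesis by (simp add: lookup_word_mono split: if_splits)
  qed
  have kl: "k + e0 \<le> length v0" using pos[of "e0 - 1"] e0 by linarith
  have tk: "take e0 (drop k v0) = w0"
    by (rule nth_equalityI) (use kl pos in \<open>auto simp: e0_def\<close>)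
  have vs: "v0 = take k v0 @ w0 @ drop (k + e0) v0"
  proof -
    have "v0 = take k v0 @ drop k v0" by simp
    also have "drop k v0 = take e0 (drop k v0) @ drop e0 (drop k v0)" by (rule append_take_drop_id[symmetric])
    also have "drop e0 (drop k v0) = drop (k + e0) v0" by (simp add: add.commute)
    finally show ?thesis using tk by simp
  qed
  define u where "u = take k v0"
  define u' where "u' = drop (k + e0) v0"
  have lu: "length u = k" using kl by (simp add: u_def)
  have wm: "word_mono (u @ w @ u') = word_mono u + S k (word_mono w) + S (k + length w) (word_mono u')" for w :: "nat list"
    by (simp add: word_mono_append lu S_add S_S add.assoc)
  have vs': "u @ w0 @ u' = v0" unfolding u_def u'_def by (rule vs[symmetric])
  have "word_mono v0 = word_mono u + S k (word_mono w0) + S (k + e0) (word_mono u')"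
    using wm[of w0] vs' by (simp add: e0_def)
  then have "m + S k (word_mono w0) = word_mono u + S (k + e0) (word_mono u') + S k (word_mono w0)"
    using eq by (simp add: add_ac)
  then have m: "m = word_mono u + S (k + e0) (word_mono u')" by simp
  show ?thesis
  proof (intro conjI allI impI)
    show "v0 = take k v0 @ w0 @ drop (k + length w0) v0" using vs unfolding e0_def .
  next
    fix w :: "nat list" assume "length w = length w0"
    then show "m + S k (word_mono w) = word_mono (take k v0 @ w @ drop (k + length w0) v0)"
      using wm[of w] m unfolding u_def u'_def e0_def by (simp add: add_ac)
  qed
qed

lemma if_eq1: "(if a then 0 else if b then 1 else 0) = (1::nat) \<Longrightarrow> \<not> a \<and> b"
  by (auto split: if_splits)
lemma t2: assumes "Poly_Mapping.lookup (S k (word_mono w0)) (x, Suc i) = 1"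
  shows  "\<not> Suc i < k \<and> (1 \<le> Suc i - k \<and> Suc i - k \<le> length w0 \<and> w0 ! (Suc i - k - 1) = x)"
proof -
  have "Poly_Mapping.lookup (S k (word_mono w0)) (x, Suc i) = (if Suc i < k then 0 else Poly_Mapping.lookup (word_mono w0) (x, Suc i - k))"
    by (simp only: lookup_S fst_conv snd_conv)
  also have "\<dots> = (if Suc i < k then 0 else if 1 \<le> Suc i - k \<and> Suc i - k \<le> length w0 \<and> w0 ! (Suc i - k - 1) = x then 1 else 0)"
    by (simp only: lookup_word_mono fst_conv snd_conv)
  finally show ?thesis using assms if_eq1 by metis
qed

lemma letters_lemma:
  assumes pm: "pvalid n m" and w0: "set w0 \<subseteq> {1..n}" and eq: "m + S k (word_mono w0) = word_mono v0"
  shows "set v0 \<subseteq> {1..n}"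
proof
  fix x assume "x \<in> set v0"
  then obtain i where i: "i < length v0" "x = v0 ! i" by (auto simp: in_set_conv_nth)
  have "Poly_Mapping.lookup (word_mono v0) (x, Suc i) = 1" using i by (simp add: lookup_word_mono)
  moreover have "Poly_Mapping.lookup (word_mono v0) (x, Suc i) = Poly_Mapping.lookup (m + S k (word_mono w0)) (x, Suc i)"
    by (simp only: eq)
  ultimately have s: "Poly_Mapping.lookup m (x, Suc i) + Poly_Mapping.lookup (S k (word_mono w0)) (x, Suc i) = 1"
    by (simp only: lookup_add)
  show "x \<in> {1..n}"
  proof (cases "Poly_Mapping.lookup m (x, Suc i) = 0")
    case False
    then have "(x, Suc i) \<in> Poly_Mapping.keys m" by (simp add: in_keys_iff)
    then show ?thesis using pm unfolding pvalid_def by fastforce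
  next
    case True
    then have "Poly_Mapping.lookup (S k (word_mono w0)) (x, Suc i) = 1" using s by simp
    then have "\<not> Suc i < k \<and> (1 \<le> Suc i - k \<and> Suc i - k \<le> length w0 \<and> w0 ! (Suc i - k - 1) = x)"
      by (rule t2)
    then have a: "Suc i - k - 1 < length w0" and b: "w0 ! (Suc i - k - 1) = x" by auto
    have "x \<in> set w0" using nth_mem[OF a] b by simp
    then show ?thesis using w0 by blast
  qed
qed



definition Wd :: "nat \<Rightarrow> ((nat \<times> nat) \<Rightarrow>\<^sub>0 nat) set" where
  "Wd d = word_mono ` {w. length w = d}"

lemma core:
  assumes I: "graded_ideal_F n I" and g: "g \<in> I" and pm: "pvalid n m"
  shows "proj (Wd d) (Poly_Mapping.single m c * pmapc (S k \<circ> word_mono) 1 g) \<in> iota ` ideal_deg I d"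
proof -
  define T where "T = {w \<in> Poly_Mapping.keys g. m + S k (word_mono w) \<in> Wd d}"
  have gF: "\<forall>w\<in>Poly_Mapping.keys g. set w \<subseteq> {1..n}"
    using g graded_I_sub[OF I] by (auto simp: F_set_def)
  have eq1: "Poly_Mapping.single m c * pmapc (S k \<circ> word_mono) 1 g =
      (\<Sum>w\<in>Poly_Mapping.keys g. Poly_Mapping.single (m + S k (word_mono w)) (c * Poly_Mapping.lookup g w))"
    by (simp add: pmapc_def sum_distrib_left mult_single)
  have eq2: "proj (Wd d) (Poly_Mapping.single m c * pmapc (S k \<circ> word_mono) 1 g) =
      (\<Sum>w\<in>T. Poly_Mapping.single (m + S k (word_mono w)) (c * Poly_Mapping.lookup g w))"
    unfolding eq1 proj_sum proj_single T_def by (simp add: sum.inter_filter)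
  show ?thesis
  proof (cases "T = {}")
    case True
    then show ?thesis using eq2 iota_img_zero[OF I] by simp
  next
    case False
    then obtain w0 where w0T: "w0 \<in> T" by blast
    then obtain v0 where v0: "length v0 = d" "m + S k (word_mono w0) = word_mono v0"
      by (auto simp: T_def Wd_def)
    define e0 where "e0 = length w0"
    define u where "u = take k v0"
    define u' where "u' = drop (k + e0) v0"
    note spl = split_lemma[OF v0(2)]
    have sp1: "u @ w0 @ u' = v0"
      unfolding u_def u'_def e0_def using conjunct1[OF spl] by (rule sym)
    have sp2: "\<And>w. length w = e0 \<Longrightarrow> m + S k (word_mono w) = word_mono (u @ w @ u')"
      using conjunct2[OF spl] unfolding u_def u'_def e0_def by blast
    have w0k: "w0 \<in> Poly_Mapping.keys g" using w0T by (simp add: T_def)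
    have letters: "set v0 \<subseteq> {1..n}"
      by (rule letters_lemma[OF pm gF[rule_format, OF w0k] v0(2)])
    have su: "set u \<subseteq> {1..n}" unfolding u_def by (rule order.trans[OF set_take_subset letters])
    have su': "set u' \<subseteq> {1..n}" unfolding u'_def by (rule order.trans[OF set_drop_subset letters])
    have "length (u @ w0 @ u') = d" using sp1 v0(1) by simp
    then have len: "length u + e0 + length u' = d" by (simp add: e0_def)
    have "deg (m + S k (word_mono w0)) = deg (word_mono v0)" by (simp only: v0(2))
    then have dm: "deg m + e0 = d"
      using v0(1) by (simp only: deg_add deg_S deg_word_mono e0_def)
    have Tc: "T = {w \<in> Poly_Mapping.keys g. length w = e0}"
    proof (intro set_eqI iffI)
      fix w assume "w \<in> T"
      then obtain v where vv: "length v = d" "m + S k (word_mono w) = word_mono v" "w \<in> Poly_Mapping.keys g"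
        by (auto simp: T_def Wd_def)
      have "deg (m + S k (word_mono w)) = deg (word_mono v)" by (simp only: vv(2))
      then have "deg m + length w = d"
        using vv(1) by (simp only: deg_add deg_S deg_word_mono)
      then show "w \<in> {w \<in> Poly_Mapping.keys g. length w = e0}" using dm \<open>w \<in> Poly_Mapping.keys g\<close> by simp
    next
      fix w assume "w \<in> {w \<in> Poly_Mapping.keys g. length w = e0}"
      then have "w \<in> Poly_Mapping.keys g" "length w = e0" by auto
      then show "w \<in> T" using sp2[of w] len unfolding T_def Wd_def by auto
    qed
    define G where "G = F_component e0 g"
    define \<psi> where "\<psi> = (\<lambda>y::nat list. u @ y @ u')"
    have injpsi: "inj \<psi>" by (auto simp: inj_on_def \<psi>_def)
    define h where "h = pmapc \<psi> c G"
    have clc: "\<forall>f\<in>I. \<forall>d. F_component d f \<in> I"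
      and clm: "\<forall>a\<in>F_set n. \<forall>f\<in>I. fmul a f \<in> I \<and> fmul f a \<in> I"
      using I unfolding graded_ideal_F_def by blast+
    have GI: "G \<in> I" using clc g unfolding G_def by blast
    have "h = fmul (fmul (Poly_Mapping.single u c) G) (Poly_Mapping.single u' 1)"
    proof -
      have "fmul (fmul (Poly_Mapping.single u c) G) (Poly_Mapping.single u' 1) =
            pmapc ((\<lambda>y. y @ u') \<circ> (@) u) (1 * c) G"
        by (simp add: fmul_single_left fmul_single_right pmapc_comp inj_app_left inj_app_right)
      also have "(\<lambda>y. y @ u') \<circ> (@) u = \<psi>" by (auto simp: \<psi>_def)
      finally show ?thesis by (simp add: h_def)
    qed
    also have "\<dots> \<in> I"
    proof -
      have "fmul (Poly_Mapping.single u c) G \<in> I" using clm F_set_single[OF su] GI by blast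
      then show ?thesis using clm F_set_single[OF su'] by blast
    qed
    finally have hI: "h \<in> I" .
    have hom: "F_homog d h"
      unfolding F_homog_def
    proof
      fix w assume "w \<in> Poly_Mapping.keys h"
      then obtain y where "y \<in> Poly_Mapping.keys G" "w = \<psi> y"
        using keys_pmapc_sub[of \<psi> c G] unfolding h_def by blast
      then show "length w = d" using len by (auto simp: G_def keys_F_component \<psi>_def)
    qed
    have "iota h = pmapc (word_mono \<circ> \<psi>) c G"
      by (simp add: iota_pmapc h_def pmapc_comp inj_word_mono injpsi)
    also have "\<dots> = (\<Sum>w\<in>T. Poly_Mapping.single (m + S k (word_mono w)) (c * Poly_Mapping.lookup g w))"
      unfolding pmapc_def G_def keys_F_component Tc
      by (intro sum.cong refl) (auto simp: lookup_F_component \<psi>_def sp2)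
    finally have "iota h = proj (Wd d) (Poly_Mapping.single m c * pmapc (S k \<circ> word_mono) 1 g)"
      using eq2 by simp
    moreover have "h \<in> ideal_deg I d" using hI hom by (simp add: ideal_deg_def)
    ultimately show ?thesis by (metis image_eqI)
  qed
qed



lemma sigma_iota: "(sigma ^^ k) (iota g) = pmapc (S k \<circ> word_mono) 1 g"
  by (simp add: sigma_pow iota_pmapc pmapc_comp inj_S inj_word_mono)

lemma proj_Q:
  assumes "q \<in> Q_ideal n"
  shows "proj (Wd d) q = 0"
proof (rule poly_mapping_eqI)
  fix m
  show "Poly_Mapping.lookup (proj (Wd d) q) m = Poly_Mapping.lookup 0 m"
  proof (cases "m \<in> Wd d")
    case True
    then obtain w where "m = word_mono w" by (auto simp: Wd_def)
    then have "\<not> Qmono m" by (simp add: word_mono_not_Qmono)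
    then have "m \<notin> Poly_Mapping.keys q" using Q_keys_Qmono[OF assms] by blast
    then show ?thesis by (simp add: lookup_proj in_keys_iff)
  next
    case False
    then show ?thesis by (simp add: lookup_proj)
  qed
qed

lemma L_main:
  fixes I :: "'k::field freealg set"
  assumes I: "graded_ideal_F n I" and a: "a \<in> L_preimage n I"
  shows "\<forall>r\<in>P_set n. proj (Wd d) (r * a) \<in> iota ` ideal_deg I d"
  using a unfolding L_preimage_def
proof induction
  case gen_zero
  then show ?case using iota_img_zero[OF I] by simp
next
  case (gen_base s)
  show ?case
  proof
    fix r :: "'k lpoly" assume r: "r \<in> P_set n"
    show "proj (Wd d) (r * s) \<in> iota ` ideal_deg I d"
    proof (cases "s \<in> Q_ideal n")
      case True
      have "r * s \<in> Q_ideal n" using True r unfolding Q_ideal_def by (rule gen_mult[rotated])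
      then show ?thesis using proj_Q[of "r * s" n d] iota_img_zero[OF I, of d] by simp
    next
      case False
      then obtain k g where g: "g \<in> I" "s = (sigma ^^ k) (iota g)" using gen_base by blast
      have "r * s = (\<Sum>m\<in>Poly_Mapping.keys r. Poly_Mapping.single m (Poly_Mapping.lookup r m) * s)"
        by (subst pm_expand[of r]) (simp add: sum_distrib_right)
      then have "proj (Wd d) (r * s) =
          (\<Sum>m\<in>Poly_Mapping.keys r. proj (Wd d) (Poly_Mapping.single m (Poly_Mapping.lookup r m) * pmapc (S k \<circ> word_mono) 1 g))"
        by (simp add: proj_sum g(2) sigma_iota)
      also have "\<dots> \<in> iota ` ideal_deg I d"
      proof (rule iota_img_sum[OF I])
        fix m assume "m \<in> Poly_Mapping.keys r"
        then have "pvalid n m" using r by (simp add: P_set_pvalid)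
        then show "proj (Wd d) (Poly_Mapping.single m (Poly_Mapping.lookup r m) * pmapc (S k \<circ> word_mono) 1 g)
                   \<in> iota ` ideal_deg I d"
          by (rule core[OF I g(1)])
      qed
      finally show ?thesis .
    qed
  qed
next
  case (gen_add a b)
  then show ?case by (simp add: distrib_left proj_add iota_img_add[OF I])
next
  case (gen_mult r' a)
  show ?case
  proof
    fix r :: "'k lpoly" assume "r \<in> P_set n"
    then have "r * r' \<in> P_set n" using gen_mult P_set_mult by blast
    then show "proj (Wd d) (r * (r' * a)) \<in> iota ` ideal_deg I d"
      using gen_mult by (simp add: mult.assoc[symmetric])
  qed
qed

lemma lookup_word_mono_pos:
  assumes "v \<in> Poly_Mapping.keys (word_mono w)"
  shows "1 \<le> snd v \<and> snd v \<le> length w \<and> fst v = w ! (snd v - 1)"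
  using assms by (simp add: in_keys_iff lookup_word_mono split: if_splits)

lemma iota_Pd:
  assumes "f \<in> F_set n" "F_homog d f"
  shows "iota f \<in> Pd_set n d \<and> P_homog d (iota f)"
proof -
  have k: "Poly_Mapping.keys (iota f) \<subseteq> word_mono ` Poly_Mapping.keys f"
    unfolding iota_pmapc by (rule keys_pmapc_sub)
  have A: "\<forall>v\<in>Poly_Mapping.keys m. 1 \<le> fst v \<and> fst v \<le> n \<and> 1 \<le> snd v \<and> snd v \<le> d"
    if mk: "m \<in> Poly_Mapping.keys (iota f)" for m
  proof -
    obtain w where w: "w \<in> Poly_Mapping.keys f" "m = word_mono w" using k mk by blast
    have sw: "set w \<subseteq> {1..n}" "length w = d" using assms w(1) by (auto simp: F_set_def F_homog_def)
    show ?thesis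
    proof
      fix v assume "v \<in> Poly_Mapping.keys m"
      then have v: "1 \<le> snd v \<and> snd v \<le> length w \<and> fst v = w ! (snd v - 1)"
        using w(2) lookup_word_mono_pos by blast
      then have "snd v - 1 < length w" by linarith
      then have "fst v \<in> set w" using v nth_mem by metis
      then show "1 \<le> fst v \<and> fst v \<le> n \<and> 1 \<le> snd v \<and> snd v \<le> d" using v sw by auto
    qed
  qed
  have B: "(\<Sum>v\<in>Poly_Mapping.keys m. Poly_Mapping.lookup m v) = d"
    if mk: "m \<in> Poly_Mapping.keys (iota f)" for m
  proof -
    obtain w where w: "w \<in> Poly_Mapping.keys f" "m = word_mono w" using k mk by blast
    have "length w = d" using assms w(1) by (auto simp: F_homog_def)
    then show ?thesis using w(2) deg_word_mono[of w] by (simp add: deg_def)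
  qed
  show ?thesis using A B by (auto simp: Pd_set_def P_set_def P_homog_def)
qed



theorem mainTheorem5:
  fixes n :: nat and I :: "'k::field freealg set" and d :: nat
  assumes "graded_ideal_F n I"
  shows "(\<forall>p \<in> P_set n.
           (\<exists>f \<in> ideal_deg I d. p - iota f \<in> Q_ideal n)
           \<longleftrightarrow>
           (p \<in> L_preimage n I
            \<and> (\<exists>q \<in> Pd_set n d. p - q \<in> Q_ideal n)
            \<and> (\<exists>q \<in> P_set n. P_homog d q \<and> p - q \<in> Q_ideal n)))
         \<and> (\<forall>f \<in> ideal_deg I d. \<forall>g \<in> ideal_deg I d. iota f - iota g \<in> Q_ideal n \<longrightarrow> f = g)"
proof (rule conjI)
  show "\<forall>p \<in> P_set n.
           (\<exists>f \<in> ideal_deg I d. p - iota f \<in> Q_ideal n)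
           \<longleftrightarrow>
           (p \<in> L_preimage n I
            \<and> (\<exists>q \<in> Pd_set n d. p - q \<in> Q_ideal n)
            \<and> (\<exists>q \<in> P_set n. P_homog d q \<and> p - q \<in> Q_ideal n))"
  proof (intro ballI iffI)
  fix p assume p: "p \<in> P_set n" and "\<exists>f\<in>ideal_deg I d. p - iota f \<in> Q_ideal n"
  then obtain f where f: "f \<in> ideal_deg I d" "p - iota f \<in> Q_ideal n" by blast
  have fF: "f \<in> F_set n" "F_homog d f" using f(1) graded_I_sub[OF assms] by (auto simp: ideal_deg_def)
  have L0: "iota f + (p - iota f) \<in> L_preimage n I"
    unfolding L_preimage_def
  proof (rule gen_add; rule gen_base)
    show "iota f \<in> Q_ideal n \<union> (\<Union>k. (sigma ^^ k) ` iota ` I)"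
    proof -
      have "iota f \<in> (sigma ^^ 0) ` iota ` I" using f(1) by (simp add: ideal_deg_def)
      then show ?thesis by blast
    qed
    show "p - iota f \<in> Q_ideal n \<union> (\<Union>k. (sigma ^^ k) ` iota ` I)" using f(2) by blast
  qed
  then have L1: "p \<in> L_preimage n I" by simp
  have Pd: "iota f \<in> Pd_set n d" and Ph: "P_homog d (iota f)" using iota_Pd[OF fF] by auto
  have PP: "iota f \<in> P_set n" using Pd by (simp add: Pd_set_def)
  show "p \<in> L_preimage n I \<and> (\<exists>q \<in> Pd_set n d. p - q \<in> Q_ideal n)
            \<and> (\<exists>q \<in> P_set n. P_homog d q \<and> p - q \<in> Q_ideal n)"
    using L1 Pd Ph PP f(2) by blast
next
  fix p :: "'k lpoly" assume p: "p \<in> P_set n" and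
    h: "p \<in> L_preimage n I \<and> (\<exists>q \<in> Pd_set n d. p - q \<in> Q_ideal n)
            \<and> (\<exists>q \<in> P_set n. P_homog d q \<and> p - q \<in> Q_ideal n)"
  then obtain q1 q2 where L: "p \<in> L_preimage n I" and q1: "q1 \<in> Pd_set n d" "p - q1 \<in> Q_ideal n"
    and q2: "P_homog d q2" "p - q2 \<in> Q_ideal n" by blast
  have "proj (Wd d) (1 * p) \<in> iota ` ideal_deg I d"
    using L_main[OF assms L] P_set_one by blast
  then obtain f where f: "f \<in> ideal_deg I d" "iota f = proj (Wd d) p" by auto
  have "p - iota f = proj (- Wd d) p" by (simp only: f(2) minus_proj)
  also have "\<dots> \<in> Q_ideal n"
    unfolding proj_as_sum
  proof (rule Q_sum)
    fix m assume "m \<in> {m \<in> Poly_Mapping.keys p. m \<in> - Wd d}"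
    then have mk: "m \<in> Poly_Mapping.keys p" and mW: "m \<notin> Wd d" by auto
    have pv: "pvalid n m" using p mk by (simp add: P_set_pvalid)
    have "Qmono m"
    proof (rule ccontr)
      assume nq: "\<not> Qmono m"
      have "m \<notin> Poly_Mapping.keys (p - q1)" using Q_keys_Qmono[OF q1(2)] nq by blast
      then have "m \<in> Poly_Mapping.keys q1" using mk by (simp add: in_keys_iff lookup_minus)
      then have col: "\<forall>v\<in>Poly_Mapping.keys m. snd v \<le> d" using q1(1) by (simp add: Pd_set_def)
      have "m \<notin> Poly_Mapping.keys (p - q2)" using Q_keys_Qmono[OF q2(2)] nq by blast
      then have "m \<in> Poly_Mapping.keys q2" using mk by (simp add: in_keys_iff lookup_minus)
      then have dg: "deg m = d" using q2(1) by (simp add: P_homog_def deg_def)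
      obtain w where "length w = d" "m = word_mono w" using to_word[OF pv col nq dg] by blast
      then have "m \<in> Wd d" by (simp add: Wd_def)
      with mW show False by simp
    qed
    then show "Poly_Mapping.single m (Poly_Mapping.lookup p m) \<in> Q_ideal n"
      using pv by (rule Q_single)
  qed
  finally show "\<exists>f\<in>ideal_deg I d. p - iota f \<in> Q_ideal n" using f(1) by blast
qed
next
  show "\<forall>f \<in> ideal_deg I d. \<forall>g \<in> ideal_deg I d. iota f - iota g \<in> Q_ideal n \<longrightarrow> f = g"
  proof (intro ballI impI)
  fix f g assume f: "f \<in> ideal_deg I d" and g: "g \<in> ideal_deg I d" and q: "iota f - iota g \<in> Q_ideal n"
  show "f = g"
  proof (rule poly_mapping_eqI)
    fix w
    have "word_mono w \<notin> Poly_Mapping.keys (iota f - iota g)"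
      using Q_keys_Qmono[OF q] word_mono_not_Qmono by blast
    then have "Poly_Mapping.lookup (iota f - iota g) (word_mono w) = 0" by (simp add: in_keys_iff)
    then show "Poly_Mapping.lookup f w = Poly_Mapping.lookup g w"
      by (simp add: lookup_minus lookup_iota_word)
  qed
  qed
qed

end
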